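(* Let $n\ge1$, $U_n$ the family of bounded subsets of $\mathbb R^n$, and $\mu:U_n\to B_2$ a measure. (a) If $\mu$ is derivable on the topological closure $\overline A$ of a set $A\in U_n$, then: (a.1) the set $\mathrm{supp}_A\,d\mu=\{x\in A:d\mu(x)=1\}$ is finite; (a.2) for every $x\in A$ there exists $\varepsilon>0$ such that for every $B\in U_n$ with $x\in B$ and $d(B)<\varepsilon$ one has $\mu(B-\{x\})=0$; (a.3) $\mu(A)=\sum_{x\in A}\mu(\{x\})$; (a.4) for every partition $\{A_i\}_{i\in I}$ of $A$ into subsets $A_i\subset A$, $\mu(A)=\sum_{i\in I}\mu(A_i)$. (b) If $\mu$ is derivable (on every set of $U_n$), then the set $\mathrm{supp}\,d\mu=\{x\in\mathbb R^n:d\mu(x)=1\}$ is locally finite.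
   Context: $B_2=\{0,1\}$. $\mu$ is a measure if for every sequence of pairwise disjoint sets of $U_n$ whose union is in $U_n$, only finitely many have $\mu$-value 1 and $\mu$ of the union is their number modulo 2. $d(B)=\sup_{x,y\in B}\|x-y\|$. $\mu$ is derivable at $x$ if there exist $\varepsilon>0$, $a\in B_2$ with $\mu(B)=a$ for all $B\in U_n$ containing $x$ with $d(B)<\varepsilon$; then $d\mu(x)=a$. Derivable on a set means derivable at each of its points. A sum $\sum_{j\in J}a_j$ of elements of $B_2$ indexed by an arbitrary set is defined when only finitely many $a_j$ equal 1, and then equals that number modulo 2. $H\subset\mathbb R^n$ is locally finite if $A\cap H$ is finite for every bounded $A$. *)

theory Defs
  imports "HOL-Analysis.Analysis" "HOL-Library.Z2"
begin

text \<open>B_2 = {0,1} is the two-element field \<open>bit\<close>. U_n = bounded subsets of \<open>real^'n\<close>.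
  d(B) is \<open>diameter B\<close>.\<close>

definition b2_summable :: "('j \<Rightarrow> bit) \<Rightarrow> 'j set \<Rightarrow> bool" where
  "b2_summable a J \<longleftrightarrow> finite {j\<in>J. a j = 1}"

definition b2_sum :: "('j \<Rightarrow> bit) \<Rightarrow> 'j set \<Rightarrow> bit" where
  "b2_sum a J = of_nat (card {j\<in>J. a j = 1})"

definition is_b2_measure :: "(('a::real_normed_vector) set \<Rightarrow> bit) \<Rightarrow> bool" where
  "is_b2_measure \<mu> \<longleftrightarrow>
     (\<forall>S :: nat \<Rightarrow> 'a set.
        (\<forall>i. bounded (S i)) \<and> disjoint_family S \<and> bounded (\<Union>i. S i) \<longrightarrow>
          finite {i. \<mu> (S i) = 1} \<and> \<mu> (\<Union>i. S i) = of_nat (card {i. \<mu> (S i) = 1}))"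

definition derivable_at :: "(('a::real_normed_vector) set \<Rightarrow> bit) \<Rightarrow> 'a \<Rightarrow> bool" where
  "derivable_at \<mu> x \<longleftrightarrow>
     (\<exists>\<epsilon>>0. \<exists>a. \<forall>B. bounded B \<and> x \<in> B \<and> diameter B < \<epsilon> \<longrightarrow> \<mu> B = a)"

definition dmu :: "(('a::real_normed_vector) set \<Rightarrow> bit) \<Rightarrow> 'a \<Rightarrow> bit" where
  "dmu \<mu> x = (THE a. \<exists>\<epsilon>>0. \<forall>B. bounded B \<and> x \<in> B \<and> diameter B < \<epsilon> \<longrightarrow> \<mu> B = a)"

definition derivable_on :: "(('a::real_normed_vector) set \<Rightarrow> bit) \<Rightarrow> 'a set \<Rightarrow> bool" where
  "derivable_on \<mu> S \<longleftrightarrow> (\<forall>x\<in>S. derivable_at \<mu> x)"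

definition locally_finite_set :: "('a::real_normed_vector) set \<Rightarrow> bool" where
  "locally_finite_set H \<longleftrightarrow> (\<forall>A. bounded A \<longrightarrow> finite (A \<inter> H))"

end

theory Submission
  imports Defs
begin

lemma bit_cases2: "(a::bit) = 0 \<or> a = 1" by (cases a) simp_all

lemma mu_empty:
  assumes "is_b2_measure \<mu>" shows "\<mu> {} = 0"
proof -
  have "finite {i::nat. \<mu> ((\<lambda>i. {}) i) = 1}"
  proof -
    have "disjoint_family (\<lambda>i::nat. {}::'a set)" by (simp add: disjoint_family_on_def)
    moreover have "bounded (\<Union>i::nat. ({}::'a set))" by simp
    moreover have "\<forall>i::nat. bounded ({}::'a set)" by simp
    moreover note assms[unfolded is_b2_measure_def, rule_format, of "\<lambda>i::nat. {}"]
    ultimately show ?thesis by blast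
  qed
  then show ?thesis by (cases "\<mu> {} = 1") auto
qed

lemma mu_add:
  assumes m: "is_b2_measure \<mu>" and "bounded A" "bounded B" "A \<inter> B = {}"
  shows "\<mu> (A \<union> B) = \<mu> A + \<mu> B"
proof -
  define S where "S = (\<lambda>i::nat. if i = 0 then A else if i = 1 then B else {})"
  have "(\<Union>i. S i) = A \<union> B"
    unfolding S_def by (auto split: if_splits)
  moreover have "disjoint_family S" using assms(4) unfolding S_def disjoint_family_on_def by auto
  moreover have "\<forall>i. bounded (S i)" using assms unfolding S_def by auto
  ultimately have e: "\<mu> (A \<union> B) = of_nat (card {i. \<mu> (S i) = 1})"
    using m assms unfolding is_b2_measure_def by (metis bounded_Un)
  have "{i. \<mu> (S i) = 1} = (if \<mu> A = 1 then {0} else {}) \<union> (if \<mu> B = 1 then {1} else {})"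
    using mu_empty[OF m] unfolding S_def by (auto split: if_splits)
  then show ?thesis using e bit_cases2[of "\<mu> A"] bit_cases2[of "\<mu> B"] by auto
qed

lemma bit_sum_card:
  fixes a :: "'j \<Rightarrow> bit"
  assumes "finite J" shows "(\<Sum>j\<in>J. a j) = of_nat (card {j\<in>J. a j = 1})"
  using assms
proof (induction J rule: finite_induct)
  case (insert x F)
  show ?case
  proof (cases "a x = 1")
    case True
    then have "{j\<in>insert x F. a j = 1} = insert x {j\<in>F. a j = 1}" by auto
    then show ?thesis using insert True by simp
  next
    case False
    then have "{j\<in>insert x F. a j = 1} = {j\<in>F. a j = 1}" by auto
    then show ?thesis using insert False by simp
  qed
qed simp

lemma dmu_eq:
  assumes "derivable_at \<mu> x" shows "dmu \<mu> x = \<mu> {x}"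
proof -
  obtain e a where e: "e > 0" "\<forall>B. bounded B \<and> x \<in> B \<and> diameter B < e \<longrightarrow> \<mu> B = a"
    using assms unfolding derivable_at_def by blast
  have a: "a = \<mu> {x}" using e by auto
  show ?thesis unfolding dmu_def
  proof (rule the_equality)
    show "\<exists>\<epsilon>>0. \<forall>B. bounded B \<and> x \<in> B \<and> diameter B < \<epsilon> \<longrightarrow> \<mu> B = \<mu> {x}"
      using e a by blast
  next
    fix b assume "\<exists>\<epsilon>>0. \<forall>B. bounded B \<and> x \<in> B \<and> diameter B < \<epsilon> \<longrightarrow> \<mu> B = b"
    then show "b = \<mu> {x}" by force
  qed
qed

lemma local_count:
  fixes \<mu> :: "'a::real_normed_vector set \<Rightarrow> bit"
  assumes m: "is_b2_measure \<mu>" and d: "derivable_at \<mu> y"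
  shows "\<exists>r>0. \<forall>D. D \<subseteq> ball y r \<longrightarrow> finite {x\<in>D. \<mu> {x} = 1} \<and> \<mu> D = of_nat (card {x\<in>D. \<mu> {x} = 1})"
proof -
  obtain e a where e: "e > 0" "\<forall>B. bounded B \<and> y \<in> B \<and> diameter B < e \<longrightarrow> \<mu> B = a"
    using d unfolding derivable_at_def by blast
  have a: "a = \<mu> {y}" using e by auto
  define r where "r = e / 3"
  have r: "r > 0" using e unfolding r_def by simp
  have key: "\<mu> (insert y D) = \<mu> {y}" if "D \<subseteq> ball y r" for D
  proof -
    have "bounded (insert y D)" using that bounded_ball bounded_subset by (metis bounded_insert)
    moreover have "diameter (insert y D) \<le> 2 * r"
    proof (rule diameter_le)
      fix u v assume "u \<in> insert y D" "v \<in> insert y D"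
      then have "dist y u < r \<or> u = y" "dist y v < r \<or> v = y" using that
        by (auto simp: subset_iff)
      then have "dist u v < 2 * r" using r dist_triangle[of u v y] dist_commute[of u y]
        by auto
      then show "norm (u - v) \<le> 2 * r" by (simp add: dist_norm)
    qed simp
    moreover have "2 * r < e" using e unfolding r_def by simp
    ultimately have "diameter (insert y D) < e" by linarith
    then show ?thesis using e(2) a \<open>bounded (insert y D)\<close> by blast
  qed
  have one: "\<mu> {z} = 0" if "z \<in> ball y r" "z \<noteq> y" for z
  proof -
    have "{y} \<union> {z} = {y, z}" by auto
    then have "\<mu> {y, z} = \<mu> {y} + \<mu> {z}" using mu_add[OF m, of "{y}" "{z}"] that by simp
    moreover have "{y, z} = insert y {z}" by simp
    moreover have "\<mu> (insert y {z}) = \<mu> {y}" using key[of "{z}"] that by simp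
    ultimately have "\<mu> {y} + \<mu> {z} = \<mu> {y}" by simp
    then show ?thesis using bit_cases2[of "\<mu> {y}"] bit_cases2[of "\<mu> {z}"] by auto
  qed
  show ?thesis
  proof (intro exI[of _ r] conjI allI impI r)
    fix D assume D: "D \<subseteq> ball y r"
    have sub: "{x\<in>D. \<mu> {x} = 1} \<subseteq> {y}" using one D by fastforce
    then show "finite {x\<in>D. \<mu> {x} = 1}" using finite_subset by blast
    show "\<mu> D = of_nat (card {x\<in>D. \<mu> {x} = 1})"
    proof (cases "y \<in> D")
      case True
      then have "\<mu> D = \<mu> {y}" using key[OF D] by (simp add: insert_absorb)
      moreover have "{x\<in>D. \<mu> {x} = 1} = (if \<mu> {y} = 1 then {y} else {})" using sub True by auto
      ultimately show ?thesis using bit_cases2[of "\<mu> {y}"] by auto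
    next
      case False
      have "bounded D" using D bounded_ball bounded_subset by blast
      then have "\<mu> (insert y D) = \<mu> {y} + \<mu> D" using mu_add[OF m, of "{y}" D] False by auto
      then have "\<mu> {y} + \<mu> D = \<mu> {y}" using key[OF D] by simp
      then have "\<mu> D = 0" using bit_cases2[of "\<mu> {y}"] bit_cases2[of "\<mu> D"] by auto
      moreover have "{x\<in>D. \<mu> {x} = 1} = {}" using sub False by auto
      ultimately show ?thesis by (metis card.empty of_nat_0)
    qed
  qed
qed


lemma cover_count:
  fixes \<mu> :: "'a::real_normed_vector set \<Rightarrow> bit"
  assumes m: "is_b2_measure \<mu>" and fin: "finite Y"
    and loc: "\<forall>y\<in>Y. \<forall>D. D \<subseteq> ball y (r y) \<longrightarrow> finite {x\<in>D. \<mu> {x} = 1} \<and> \<mu> D = of_nat (card {x\<in>D. \<mu> {x} = 1})"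
  shows "\<forall>D. bounded D \<and> D \<subseteq> (\<Union>y\<in>Y. ball y (r y)) \<longrightarrow> finite {x\<in>D. \<mu> {x} = 1} \<and> \<mu> D = of_nat (card {x\<in>D. \<mu> {x} = 1})"
  using fin loc
proof (induction Y rule: finite_induct)
  case empty
  show ?case
  proof (intro allI impI)
    fix D :: "'a set" assume "bounded D \<and> D \<subseteq> (\<Union>y\<in>{}. ball y (r y))"
    then have "D = {}" by simp
    then show "finite {x\<in>D. \<mu> {x} = 1} \<and> \<mu> D = of_nat (card {x\<in>D. \<mu> {x} = 1})"
      using mu_empty[OF m] by simp
  qed
next
  case (insert y Y)
  show ?case
  proof (intro allI impI)
    fix D assume D: "bounded D \<and> D \<subseteq> (\<Union>y\<in>insert y Y. ball y (r y))"
    define D1 where "D1 = D \<inter> ball y (r y)"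
    define D2 where "D2 = D - ball y (r y)"
    have b1: "bounded D1" "bounded D2" using D unfolding D1_def D2_def by (meson Diff_subset Int_lower1 bounded_subset)+
    have q1: "finite {x\<in>D1. \<mu> {x} = 1} \<and> \<mu> D1 = of_nat (card {x\<in>D1. \<mu> {x} = 1})"
      using insert.prems unfolding D1_def by (meson Int_lower2 insertI1)
    have "D2 \<subseteq> (\<Union>y\<in>Y. ball y (r y))" using D unfolding D2_def by auto
    then have q2: "finite {x\<in>D2. \<mu> {x} = 1} \<and> \<mu> D2 = of_nat (card {x\<in>D2. \<mu> {x} = 1})"
    proof -
      have "\<forall>y\<in>Y. \<forall>D. D \<subseteq> ball y (r y) \<longrightarrow> finite {x\<in>D. \<mu> {x} = 1} \<and> \<mu> D = of_nat (card {x\<in>D. \<mu> {x} = 1})"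
        using insert.prems by simp
      then show ?thesis using insert.IH b1(2) \<open>D2 \<subseteq> _\<close> by blast
    qed
    have DU: "D = D1 \<union> D2" and dj: "D1 \<inter> D2 = {}" unfolding D1_def D2_def by auto
    have sU: "{x\<in>D. \<mu> {x} = 1} = {x\<in>D1. \<mu> {x} = 1} \<union> {x\<in>D2. \<mu> {x} = 1}" using DU by auto
    have cU: "card {x\<in>D. \<mu> {x} = 1} = card {x\<in>D1. \<mu> {x} = 1} + card {x\<in>D2. \<mu> {x} = 1}"
      unfolding sU using q1 q2 dj by (intro card_Un_disjoint) auto
    have "\<mu> D = \<mu> D1 + \<mu> D2" using mu_add[OF m b1 dj] DU by simp
    also have "\<dots> = of_nat (card {x\<in>D1. \<mu> {x} = 1}) + of_nat (card {x\<in>D2. \<mu> {x} = 1})"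
      using q1 q2 by simp
    also have "\<dots> = of_nat (card {x\<in>D. \<mu> {x} = 1})" unfolding cU by simp
    finally have "\<mu> D = of_nat (card {x\<in>D. \<mu> {x} = 1})" .
    moreover have "finite {x\<in>D. \<mu> {x} = 1}" using q1 q2 unfolding sU by simp
    ultimately show "finite {x\<in>D. \<mu> {x} = 1} \<and> \<mu> D = of_nat (card {x\<in>D. \<mu> {x} = 1})"
      by blast
  qed
qed

lemma all_count:
  fixes \<mu> :: "(real ^ 'n) set \<Rightarrow> bit"
  assumes m: "is_b2_measure \<mu>" and A: "bounded A" and der: "derivable_on \<mu> (closure A)"
  shows "\<forall>D. D \<subseteq> A \<longrightarrow> finite {x\<in>D. \<mu> {x} = 1} \<and> \<mu> D = of_nat (card {x\<in>D. \<mu> {x} = 1})"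
proof -
  define Q where "Q y r \<longleftrightarrow> r > 0 \<and> (\<forall>D. D \<subseteq> ball y r \<longrightarrow> finite {x\<in>D. \<mu> {x} = 1} \<and> \<mu> D = of_nat (card {x\<in>D. \<mu> {x} = 1}))" for y r
  define r where "r y = (SOME r. Q y r)" for y
  have rQ: "Q y (r y)" if "y \<in> closure A" for y
  proof -
    have "derivable_at \<mu> y" using der that unfolding derivable_on_def by blast
    then have "\<exists>r. Q y r" using local_count[OF m] unfolding Q_def by blast
    then show ?thesis unfolding r_def by (rule someI_ex)
  qed
  have cpt: "compact (closure A)" using A by (simp add: compact_closure)
  have cov: "closure A \<subseteq> (\<Union>y\<in>closure A. ball y (r y))"
  proof
    fix y assume y: "y \<in> closure A"
    then have "r y > 0" using rQ unfolding Q_def by blast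
    then have "y \<in> ball y (r y)" by simp
    then show "y \<in> (\<Union>y\<in>closure A. ball y (r y))" using y by (rule UN_I[rotated])
  qed
  obtain Y where Y: "Y \<subseteq> closure A" "finite Y" "closure A \<subseteq> (\<Union>y\<in>Y. ball y (r y))"
    by (rule compactE_image[OF cpt open_ball cov])
  have loc: "\<forall>y\<in>Y. \<forall>D. D \<subseteq> ball y (r y) \<longrightarrow> finite {x\<in>D. \<mu> {x} = 1} \<and> \<mu> D = of_nat (card {x\<in>D. \<mu> {x} = 1})"
  proof
    fix y assume "y \<in> Y"
    then have "y \<in> closure A" using Y(1) by blast
    then have "Q y (r y)" by (rule rQ)
    then show "\<forall>D. D \<subseteq> ball y (r y) \<longrightarrow> finite {x\<in>D. \<mu> {x} = 1} \<and> \<mu> D = of_nat (card {x\<in>D. \<mu> {x} = 1})"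
      unfolding Q_def by blast
  qed
  have cc: "\<forall>D. bounded D \<and> D \<subseteq> (\<Union>y\<in>Y. ball y (r y)) \<longrightarrow> finite {x\<in>D. \<mu> {x} = 1} \<and> \<mu> D = of_nat (card {x\<in>D. \<mu> {x} = 1})"
    by (rule cover_count[OF m Y(2) loc])
  show ?thesis
  proof (intro allI impI)
    fix D assume DA: "D \<subseteq> A"
    have "bounded D" using A DA by (rule bounded_subset)
    moreover have "D \<subseteq> (\<Union>y\<in>Y. ball y (r y))"
      using DA closure_subset[of A] Y(3) by (meson order_trans)
    ultimately show "finite {x\<in>D. \<mu> {x} = 1} \<and> \<mu> D = of_nat (card {x\<in>D. \<mu> {x} = 1})" using cc by blast
  qed
qed


lemma subsingleton_finite:
  assumes "\<And>i j. i \<in> S \<Longrightarrow> j \<in> S \<Longrightarrow> i = j" shows "finite S"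
proof (cases "S = {}")
  case False
  then obtain i0 where "i0 \<in> S" by blast
  then have "S \<subseteq> {i0}" using assms by blast
  then show ?thesis using finite_subset by blast
qed simp

lemma part_a2:
  fixes \<mu> :: "(real ^ 'n) set \<Rightarrow> bit"
  assumes m: "is_b2_measure \<mu>" and d: "derivable_at \<mu> x"
  shows "\<exists>\<epsilon>>0. \<forall>B. bounded B \<and> x \<in> B \<and> diameter B < \<epsilon> \<longrightarrow> \<mu> (B - {x}) = 0"
proof -
  obtain e a where e: "e > 0" "\<forall>B. bounded B \<and> x \<in> B \<and> diameter B < e \<longrightarrow> \<mu> B = a"
    using d unfolding derivable_at_def by blast
  have a: "\<mu> {x} = a" using e by auto
  show ?thesis
  proof (intro exI[of _ e] conjI allI impI e(1))
    fix B assume B: "bounded B \<and> x \<in> B \<and> diameter B < e"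
    then have "\<mu> B = a" using e by blast
    moreover have "B = {x} \<union> (B - {x})" using B by blast
    moreover have "bounded (B - {x})" using B bounded_subset[of B "B - {x}"] by blast
    ultimately have "a = \<mu> {x} + \<mu> (B - {x})" using mu_add[OF m, of "{x}" "B - {x}"] by simp
    then have "\<mu> {x} + \<mu> (B - {x}) = \<mu> {x}" using a by simp
    then show "\<mu> (B - {x}) = 0" using bit_cases2[of "\<mu> {x}"] bit_cases2[of "\<mu> (B - {x})"] by auto
  qed
qed

lemma part_a4:
  fixes \<mu> :: "(real ^ 'n) set \<Rightarrow> bit" and P :: "'i \<Rightarrow> (real ^ 'n) set"
  assumes ac: "\<forall>D. D \<subseteq> A \<longrightarrow> finite {x\<in>D. \<mu> {x} = 1} \<and> \<mu> D = of_nat (card {x\<in>D. \<mu> {x} = 1})"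
    and P: "\<forall>i\<in>I. P i \<noteq> {} \<and> P i \<subseteq> A" "disjoint_family_on P I" "(\<Union>i\<in>I. P i) = A"
  shows "b2_summable (\<lambda>i. \<mu> (P i)) I \<and> \<mu> A = b2_sum (\<lambda>i. \<mu> (P i)) I"
proof -
  define F where "F = {x\<in>A. \<mu> {x} = 1}"
  have finF: "finite F" and muA: "\<mu> A = of_nat (card F)" using ac unfolding F_def by auto
  have FP: "{x\<in>P i. \<mu> {x} = 1} = F \<inter> P i" if "i \<in> I" for i
    using P(1) that unfolding F_def by blast
  have muP: "\<mu> (P i) = of_nat (card (F \<inter> P i))" if "i \<in> I" for i
    using ac P(1) that FP by metis
  define K where "K = {i\<in>I. F \<inter> P i \<noteq> {}}"
  have KU: "K = (\<Union>x\<in>F. {i\<in>I. x \<in> P i})" unfolding K_def by blast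
  have "finite {i\<in>I. x \<in> P i}" for x
  proof (rule subsingleton_finite)
    fix i j assume "i \<in> {i\<in>I. x \<in> P i}" "j \<in> {i\<in>I. x \<in> P i}"
    then show "i = j" using P(2) unfolding disjoint_family_on_def by blast
  qed
  then have finK: "finite K" unfolding KU using finF by blast
  have JK: "{i\<in>I. \<mu> (P i) = 1} = {i\<in>K. \<mu> (P i) = 1}"
  proof
    show "{i\<in>I. \<mu> (P i) = 1} \<subseteq> {i\<in>K. \<mu> (P i) = 1}"
    proof
      fix i assume i: "i \<in> {i\<in>I. \<mu> (P i) = 1}"
      then have "of_nat (card (F \<inter> P i)) = (1::bit)" using muP by auto
      then have "F \<inter> P i \<noteq> {}" by auto
      then show "i \<in> {i\<in>K. \<mu> (P i) = 1}" using i unfolding K_def by blast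
    qed
  qed (auto simp: K_def)
  have summ: "b2_summable (\<lambda>i. \<mu> (P i)) I"
    unfolding b2_summable_def JK using finK by simp
  have FU: "F = (\<Union>i\<in>K. F \<inter> P i)" using P(3) unfolding K_def F_def by blast
  have "card F = (\<Sum>i\<in>K. card (F \<inter> P i))"
  proof -
    have "card (\<Union>i\<in>K. F \<inter> P i) = (\<Sum>i\<in>K. card (F \<inter> P i))"
    proof (rule card_UN_disjoint[OF finK])
      show "\<forall>i\<in>K. finite (F \<inter> P i)" using finF by blast
      show "\<forall>i\<in>K. \<forall>j\<in>K. i \<noteq> j \<longrightarrow> F \<inter> P i \<inter> (F \<inter> P j) = {}"
        using P(2) unfolding K_def disjoint_family_on_def by blast
    qed
    then show ?thesis using FU by simp
  qed
  then have "(of_nat (card F) :: bit) = (\<Sum>i\<in>K. of_nat (card (F \<inter> P i)))" by simp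
  also have "\<dots> = (\<Sum>i\<in>K. \<mu> (P i))"
    by (rule sum.cong) (auto simp: K_def muP)
  also have "\<dots> = of_nat (card {i\<in>K. \<mu> (P i) = 1})" by (rule bit_sum_card[OF finK])
  finally have "\<mu> A = b2_sum (\<lambda>i. \<mu> (P i)) I" unfolding b2_sum_def JK muA .
  then show ?thesis using summ by blast
qed

theorem corollary5p14:
  fixes \<mu> :: "(real ^ 'n) set \<Rightarrow> bit"
  assumes meas: "is_b2_measure \<mu>"
  shows
    "(\<forall>A. bounded A \<and> derivable_on \<mu> (closure A) \<longrightarrow>
        finite {x\<in>A. dmu \<mu> x = 1}
      \<and> (\<forall>x\<in>A. \<exists>\<epsilon>>0. \<forall>B. bounded B \<and> x \<in> B \<and> diameter B < \<epsilon> \<longrightarrow> \<mu> (B - {x}) = 0)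
      \<and> (b2_summable (\<lambda>x. \<mu> {x}) A \<and> \<mu> A = b2_sum (\<lambda>x. \<mu> {x}) A)
      \<and> (\<forall>(I :: 'i set) (P :: 'i \<Rightarrow> (real ^ 'n) set).
            (\<forall>i\<in>I. P i \<noteq> {} \<and> P i \<subseteq> A) \<and> disjoint_family_on P I \<and> (\<Union>i\<in>I. P i) = A
            \<longrightarrow> b2_summable (\<lambda>i. \<mu> (P i)) I \<and> \<mu> A = b2_sum (\<lambda>i. \<mu> (P i)) I))
   \<and> (derivable_on \<mu> UNIV \<longrightarrow> locally_finite_set {x. dmu \<mu> x = 1})"
proof (rule conjI; (intro allI impI))
  fix A :: "(real ^ 'n) set"
  assume H: "bounded A \<and> derivable_on \<mu> (closure A)"
  then have A: "bounded A" and der: "derivable_on \<mu> (closure A)" by auto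
  note ac = all_count[OF meas A der]
  have dA: "derivable_at \<mu> x" if "x \<in> A" for x
    using der that closure_subset unfolding derivable_on_def by blast
  have eqs: "{x\<in>A. dmu \<mu> x = 1} = {x\<in>A. \<mu> {x} = 1}" 
  proof -
    have "dmu \<mu> x = \<mu> {x}" if "x \<in> A" for x using dA[OF that] by (rule dmu_eq)
    then show ?thesis by auto
  qed
  have r1: "finite {x\<in>A. dmu \<mu> x = 1}" unfolding eqs using ac by blast
  have r2: "\<forall>x\<in>A. \<exists>\<epsilon>>0. \<forall>B. bounded B \<and> x \<in> B \<and> diameter B < \<epsilon> \<longrightarrow> \<mu> (B - {x}) = 0"
    using dA part_a2[OF meas] by blast
  have r3: "b2_summable (\<lambda>x. \<mu> {x}) A" unfolding b2_summable_def using ac by blast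
  have r4: "\<mu> A = b2_sum (\<lambda>x. \<mu> {x}) A" unfolding b2_sum_def using ac by blast
  have r5: "\<forall>(I :: 'i set) (P :: 'i \<Rightarrow> (real ^ 'n) set).
            (\<forall>i\<in>I. P i \<noteq> {} \<and> P i \<subseteq> A) \<and> disjoint_family_on P I \<and> (\<Union>i\<in>I. P i) = A
            \<longrightarrow> b2_summable (\<lambda>i. \<mu> (P i)) I \<and> \<mu> A = b2_sum (\<lambda>i. \<mu> (P i)) I"
  proof (intro allI impI)
    fix I :: "'i set" and P :: "'i \<Rightarrow> (real ^ 'n) set"
    assume "(\<forall>i\<in>I. P i \<noteq> {} \<and> P i \<subseteq> A) \<and> disjoint_family_on P I \<and> (\<Union>i\<in>I. P i) = A"
    then show "b2_summable (\<lambda>i. \<mu> (P i)) I \<and> \<mu> A = b2_sum (\<lambda>i. \<mu> (P i)) I"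
      using part_a4[OF ac] by blast
  qed
  show "finite {x\<in>A. dmu \<mu> x = 1}
      \<and> (\<forall>x\<in>A. \<exists>\<epsilon>>0. \<forall>B. bounded B \<and> x \<in> B \<and> diameter B < \<epsilon> \<longrightarrow> \<mu> (B - {x}) = 0)
      \<and> (b2_summable (\<lambda>x. \<mu> {x}) A \<and> \<mu> A = b2_sum (\<lambda>x. \<mu> {x}) A)
      \<and> (\<forall>(I :: 'i set) (P :: 'i \<Rightarrow> (real ^ 'n) set).
            (\<forall>i\<in>I. P i \<noteq> {} \<and> P i \<subseteq> A) \<and> disjoint_family_on P I \<and> (\<Union>i\<in>I. P i) = A
            \<longrightarrow> b2_summable (\<lambda>i. \<mu> (P i)) I \<and> \<mu> A = b2_sum (\<lambda>i. \<mu> (P i)) I)"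
    using r1 r2 r3 r4 r5 by (intro conjI)
next
  assume U: "derivable_on \<mu> UNIV"
  show "locally_finite_set {x. dmu \<mu> x = 1}"
    unfolding locally_finite_set_def
  proof (intro allI impI)
    fix A :: "(real ^ 'n) set" assume A: "bounded A"
    have der: "derivable_on \<mu> (closure A)" using U unfolding derivable_on_def by blast
    have eqs: "A \<inter> {x. dmu \<mu> x = 1} = {x\<in>A. \<mu> {x} = 1}"
    proof -
      have "dmu \<mu> x = \<mu> {x}" for x using U dmu_eq unfolding derivable_on_def by blast
      then show ?thesis by auto
    qed
    show "finite (A \<inter> {x. dmu \<mu> x = 1})" unfolding eqs using all_count[OF meas A der] by blast
  qed
qed

end
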